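(* Fix a robot $k$ and a group $G_{\hat k}$, $\hat k\in\{1,\dots,m-1\}$, containing $k$, whose other members are $l_1,\dots,l_j$ with $j\ge 2$. Let $d>0$ and let $\mathrm{Rot}_{l_1,l_2,k}(\pi,\pi,0)$ denote any composition of the rotation-only operations $h_1,\dots,h_{m-1},f_m$ that changes the orientations of $l_1$ and $l_2$ by $\pi$ and that of $k$ by $0$ (mod $2\pi$), leaving all positions unchanged (such a composition exists). Then the sequence $P_1(d)=(g_{\hat k}(d),\,\mathrm{Rot}_{l_1,l_2,k}(\pi,\pi,0),\,g_{\hat k}(d))$ has the following net effect: every robot not in $G_{\hat k}$ has unchanged position; robots $l_1$ and $l_2$ end at their initial positions; robot $k$ is translated by $2d(\cos\theta_k,\sin\theta_k)$ (with $\theta_k$ its initial orientation) and has unchanged orientation. Thus only robots among $l_3,\dots,l_j,k$ can change position.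
   Context: A swarm of $n$ planar robots; robot $j$ has state $(x_j,y_j,\theta_j)$, $\theta_j$ mod $2\pi$; all robots have the same turning radius $r>0$. Groups $G_1,\dots,G_m$ with activation vectors $\alpha_i\in\{0,1\}^n$ ($\alpha_{i,j}=1$ iff robot $j\in G_i$); the patterns $(\alpha_{1,j},\dots,\alpha_{m-1,j})$ are pairwise distinct, none all zeros, none all ones; $G_m=\emptyset$. Dynamics: one group $\nu(t)$ active at a time, input $u(t)>0$; with $a_j=\alpha_{\nu(t),j}$: $\dot x_j=a_j\cos\theta_j u$, $\dot y_j=a_j\sin\theta_j u$, $\dot\theta_j=(1-a_j)u/r$. $f_m(\varphi)$ = activate $G_m$ with $\int u\,dt=r\varphi$ (all robots rotate in place by $\varphi$). $h_i(\varphi)$ ($i<m$): an activation sequence whose net effect leaves members of $G_i$ unchanged and keeps non-members in place with orientation increased by $\varphi$ mod $2\pi$. $g_i(d)$ ($i<m$, $d\in\mathbb R$): an activation sequence whose net effect translates each member $j$ of $G_i$ by $d(\cos\theta_j,\sin\theta_j)$ with unchanged orientation and leaves non-members unchanged. Sequences are executed left to right. *)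

theory Defs
  imports Complex_Main
begin

text \<open>A configuration assigns to every robot index j its state (x_j, y_j, theta_j).
  Orientations are real numbers compared modulo 2 pi.\<close>
type_synonym config = "nat \<Rightarrow> real \<times> real \<times> real"

definition px :: "config \<Rightarrow> nat \<Rightarrow> real" where "px c j = fst (c j)"
definition py :: "config \<Rightarrow> nat \<Rightarrow> real" where "py c j = fst (snd (c j))"
definition th :: "config \<Rightarrow> nat \<Rightarrow> real" where "th c j = snd (snd (c j))"

definition cong2pi :: "real \<Rightarrow> real \<Rightarrow> bool" where
  "cong2pi a b \<longleftrightarrow> (\<exists>z::int. a - b = 2 * pi * of_int z)"

text \<open>Activation vectors: alpha i j \<longleftrightarrow> robot j is a member of group G_i.\<close>
type_synonym activation = "nat \<Rightarrow> nat \<Rightarrow> bool"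

definition valid_groups :: "nat \<Rightarrow> nat \<Rightarrow> activation \<Rightarrow> bool" where
  "valid_groups n m \<alpha> \<longleftrightarrow> m \<ge> 2 \<and>
     (\<forall>j<n. \<forall>j'<n. j \<noteq> j' \<longrightarrow> (\<exists>i\<in>{1..<m}. \<alpha> i j \<noteq> \<alpha> i j')) \<and>
     (\<forall>j<n. \<exists>i\<in>{1..<m}. \<alpha> i j) \<and>
     (\<forall>j<n. \<exists>i\<in>{1..<m}. \<not> \<alpha> i j) \<and>
     (\<forall>j. \<not> \<alpha> m j)"

definition gEff :: "activation \<Rightarrow> nat \<Rightarrow> real \<Rightarrow> config \<Rightarrow> config" where
  "gEff \<alpha> i d c = (\<lambda>j. if \<alpha> i j
      then (px c j + d * cos (th c j), py c j + d * sin (th c j), th c j) else c j)"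

definition hEff :: "activation \<Rightarrow> nat \<Rightarrow> real \<Rightarrow> config \<Rightarrow> config" where
  "hEff \<alpha> i \<phi> c = (\<lambda>j. if \<alpha> i j then c j else (px c j, py c j, th c j + \<phi>))"

definition fEff :: "real \<Rightarrow> config \<Rightarrow> config" where
  "fEff \<phi> c = (\<lambda>j. (px c j, py c j, th c j + \<phi>))"

datatype rot_op = H nat real | F real

definition valid_rot_op :: "nat \<Rightarrow> rot_op \<Rightarrow> bool" where
  "valid_rot_op m op = (case op of H i \<phi> \<Rightarrow> 1 \<le> i \<and> i < m | F \<phi> \<Rightarrow> 0 < \<phi>)"

fun rot_step :: "activation \<Rightarrow> rot_op \<Rightarrow> config \<Rightarrow> config" where
  "rot_step \<alpha> (H i \<phi>) c = hEff \<alpha> i \<phi> c"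
| "rot_step \<alpha> (F \<phi>) c = fEff \<phi> c"

fun exec_rot :: "activation \<Rightarrow> rot_op list \<Rightarrow> config \<Rightarrow> config" where
  "exec_rot \<alpha> [] c = c"
| "exec_rot \<alpha> (op # ops) c = exec_rot \<alpha> ops (rot_step \<alpha> op c)"

definition is_Rot :: "nat \<Rightarrow> activation \<Rightarrow> nat \<Rightarrow> nat \<Rightarrow> nat \<Rightarrow> rot_op list \<Rightarrow> bool" where
  "is_Rot m \<alpha> l1 l2 k ops \<longleftrightarrow> (\<forall>op\<in>set ops. valid_rot_op m op) \<and>
     (\<forall>c. (\<forall>j. px (exec_rot \<alpha> ops c) j = px c j \<and> py (exec_rot \<alpha> ops c) j = py c j) \<and>
          cong2pi (th (exec_rot \<alpha> ops c) l1) (th c l1 + pi) \<and>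
          cong2pi (th (exec_rot \<alpha> ops c) l2) (th c l2 + pi) \<and>
          cong2pi (th (exec_rot \<alpha> ops c) k) (th c k))"

definition P1 :: "activation \<Rightarrow> nat \<Rightarrow> real \<Rightarrow> rot_op list \<Rightarrow> config \<Rightarrow> config" where
  "P1 \<alpha> kh d ops c = gEff \<alpha> kh d (exec_rot \<alpha> ops (gEff \<alpha> kh d c))"

end

theory Submission
  imports Defs
begin

fun amt :: "activation \<Rightarrow> rot_op \<Rightarrow> nat \<Rightarrow> real" where
  "amt \<alpha> (H i \<phi>) j = (if \<alpha> i j then 0 else \<phi>)"
| "amt \<alpha> (F \<phi>) j = \<phi>"

lemma exec_rot_eff:
  "px (exec_rot \<alpha> ops c) j = px c j \<and> py (exec_rot \<alpha> ops c) j = py c j \<and>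
   th (exec_rot \<alpha> ops c) j = th c j + sum_list (map (\<lambda>op. amt \<alpha> op j) ops)"
proof (induction ops arbitrary: c)
  case Nil then show ?case by simp
next
  case (Cons op ops)
  show ?case
  proof (cases op)
    case (H i \<phi>) then show ?thesis using Cons[of "hEff \<alpha> i \<phi> c"]
      by (auto simp: hEff_def px_def py_def th_def)
  next
    case (F \<phi>) then show ?thesis using Cons[of "fEff \<phi> c"]
      by (auto simp: fEff_def px_def py_def th_def)
  qed
qed

lemma boolex_obt:
  fixes ak al1 al2 bk bl1 bl2 ck cl1 cl2 :: bool
  assumes "ak \<noteq> al1" "bk \<noteq> bl2" "cl1 \<noteq> cl2"
  obtains x y z w where
    "\<not> ((x \<and> \<not> ak) \<noteq> ((y \<and> \<not> bk) \<noteq> ((z \<and> \<not> ck) \<noteq> w)))"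
    "((x \<and> \<not> al1) \<noteq> ((y \<and> \<not> bl1) \<noteq> ((z \<and> \<not> cl1) \<noteq> w)))"
    "((x \<and> \<not> al2) \<noteq> ((y \<and> \<not> bl2) \<noteq> ((z \<and> \<not> cl2) \<noteq> w)))"
proof -
  have a: "al1 = (\<not> ak)" "bl2 = (\<not> bk)" "cl2 = (\<not> cl1)" using assms by auto
  show ?thesis using that unfolding a
    by (cases ak; cases al2; cases bk; cases bl1; cases ck; cases cl1; simp; blast)
qed

definition ob :: "bool \<Rightarrow> real" where "ob b = (if b then 1 else 0)"

lemma cong_sum:
  assumes "a \<noteq> (b \<noteq> (c \<noteq> e))"
  shows "cong2pi (t + pi * (ob a + ob b + ob c + ob e)) (t + pi)"
proof -
  have "\<exists>z::int. ob a + ob b + ob c + ob e - 1 = 2 * of_int z"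
    using assms unfolding ob_def
    by (cases a; cases b; cases c; cases e; simp;
        (rule exI[of _ 0]; simp)?; (rule exI[of _ 1]; simp)?)
  then obtain z::int where "ob a + ob b + ob c + ob e - 1 = 2 * of_int z" by blast
  then have "t + pi * (ob a + ob b + ob c + ob e) - (t + pi) = 2 * pi * of_int z"
    by (simp add: algebra_simps)
  then show ?thesis unfolding cong2pi_def by blast
qed

lemma cong_sum0:
  assumes "\<not> (a \<noteq> (b \<noteq> (c \<noteq> e)))"
  shows "cong2pi (t + pi * (ob a + ob b + ob c + ob e)) t"
proof -
  have "\<exists>z::int. ob a + ob b + ob c + ob e = 2 * of_int z"
    using assms unfolding ob_def
    by (cases a; cases b; cases c; cases e; simp;
        (rule exI[of _ 0]; simp)?; (rule exI[of _ 1]; simp)?)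
  then obtain z::int where "ob a + ob b + ob c + ob e = 2 * of_int z" by blast
  then have "t + pi * (ob a + ob b + ob c + ob e) - t = 2 * pi * of_int z"
    by (simp add: algebra_simps)
  then show ?thesis unfolding cong2pi_def by blast
qed

definition opsOf :: "nat \<Rightarrow> nat \<Rightarrow> nat \<Rightarrow> bool \<Rightarrow> bool \<Rightarrow> bool \<Rightarrow> bool \<Rightarrow> rot_op list" where
  "opsOf A B C x y z w = (if x then [H A pi] else []) @ (if y then [H B pi] else []) @
     (if z then [H C pi] else []) @ (if w then [F pi] else [])"

lemma opsOf_sum:
  "sum_list (map (\<lambda>op. amt \<alpha> op j) (opsOf A B C x y z w)) =
   pi * (ob (x \<and> \<not> \<alpha> A j) + ob (y \<and> \<not> \<alpha> B j) + ob (z \<and> \<not> \<alpha> C j) + ob w)"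
  unfolding opsOf_def ob_def by (simp add: algebra_simps)

lemma cong_cos:
  assumes "cong2pi a b" shows "cos a = cos b \<and> sin a = sin b"
proof -
  obtain z::int where "a - b = 2 * pi * of_int z" using assms cong2pi_def by blast
  then have "a = b + 2 * pi * of_int z" by simp
  then show ?thesis by (simp add: cos_add sin_add cos_int_2pin sin_int_2pin)
qed

theorem mainTheorem5:
  fixes n m kh k l1 l2 :: nat and \<alpha> :: activation and d :: real
  assumes "valid_groups n m \<alpha>"
    and "1 \<le> kh" and "kh < m"
    and "k < n" and "l1 < n" and "l2 < n"
    and "\<alpha> kh k" and "\<alpha> kh l1" and "\<alpha> kh l2"
    and "l1 \<noteq> l2" and "l1 \<noteq> k" and "l2 \<noteq> k"
    and "d > 0"
  shows "(\<exists>ops. is_Rot m \<alpha> l1 l2 k ops) \<and>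
    (\<forall>ops c. is_Rot m \<alpha> l1 l2 k ops \<longrightarrow>
       (let c' = P1 \<alpha> kh d ops c in
         (\<forall>j<n. \<not> \<alpha> kh j \<longrightarrow> px c' j = px c j \<and> py c' j = py c j) \<and>
         px c' l1 = px c l1 \<and> py c' l1 = py c l1 \<and>
         px c' l2 = px c l2 \<and> py c' l2 = py c l2 \<and>
         px c' k = px c k + 2 * d * cos (th c k) \<and>
         py c' k = py c k + 2 * d * sin (th c k) \<and>
         cong2pi (th c' k) (th c k)))"
proof
  from assms(1) have sep: "\<forall>j<n. \<forall>j'<n. j \<noteq> j' \<longrightarrow> (\<exists>i\<in>{1..<m}. \<alpha> i j \<noteq> \<alpha> i j')"
    unfolding valid_groups_def by blast
  have "\<exists>i\<in>{1..<m}. \<alpha> i k \<noteq> \<alpha> i l1"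
    using sep[rule_format, OF assms(4,5)] assms(11) by auto
  then obtain A where A: "A \<in> {1..<m}" "\<alpha> A k \<noteq> \<alpha> A l1" by blast
  have "\<exists>i\<in>{1..<m}. \<alpha> i k \<noteq> \<alpha> i l2"
    using sep[rule_format, OF assms(4,6)] assms(12) by auto
  then obtain B where B: "B \<in> {1..<m}" "\<alpha> B k \<noteq> \<alpha> B l2" by blast
  have "\<exists>i\<in>{1..<m}. \<alpha> i l1 \<noteq> \<alpha> i l2"
    using sep[rule_format, OF assms(5,6)] assms(10) by auto
  then obtain C where C: "C \<in> {1..<m}" "\<alpha> C l1 \<noteq> \<alpha> C l2" by blast
  obtain x y z w where xyz:
    "\<not> ((x \<and> \<not> \<alpha> A k) \<noteq> ((y \<and> \<not> \<alpha> B k) \<noteq> ((z \<and> \<not> \<alpha> C k) \<noteq> w)))"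
    "(x \<and> \<not> \<alpha> A l1) \<noteq> ((y \<and> \<not> \<alpha> B l1) \<noteq> ((z \<and> \<not> \<alpha> C l1) \<noteq> w))"
    "(x \<and> \<not> \<alpha> A l2) \<noteq> ((y \<and> \<not> \<alpha> B l2) \<noteq> ((z \<and> \<not> \<alpha> C l2) \<noteq> w))"
    by (rule boolex_obt[OF A(2) B(2) C(2)])
  have "is_Rot m \<alpha> l1 l2 k (opsOf A B C x y z w)"
    unfolding is_Rot_def
  proof (intro conjI allI)
    show "\<forall>op\<in>set (opsOf A B C x y z w). valid_rot_op m op"
      using A(1) B(1) C(1) by (auto simp: opsOf_def valid_rot_op_def)
  next
    fix c j
    show "px (exec_rot \<alpha> (opsOf A B C x y z w) c) j = px c j"
      "py (exec_rot \<alpha> (opsOf A B C x y z w) c) j = py c j"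
      using exec_rot_eff by blast+
  next
    fix c
    show "cong2pi (th (exec_rot \<alpha> (opsOf A B C x y z w) c) l1) (th c l1 + pi)"
      unfolding conjunct2[OF conjunct2[OF exec_rot_eff]] opsOf_sum by (rule cong_sum[OF xyz(2)])
    show "cong2pi (th (exec_rot \<alpha> (opsOf A B C x y z w) c) l2) (th c l2 + pi)"
      unfolding conjunct2[OF conjunct2[OF exec_rot_eff]] opsOf_sum by (rule cong_sum[OF xyz(3)])
    show "cong2pi (th (exec_rot \<alpha> (opsOf A B C x y z w) c) k) (th c k)"
      unfolding conjunct2[OF conjunct2[OF exec_rot_eff]] opsOf_sum by (rule cong_sum0[OF xyz(1)])
  qed
  then show "\<exists>ops. is_Rot m \<alpha> l1 l2 k ops" by blast
next
  show "\<forall>ops c. is_Rot m \<alpha> l1 l2 k ops \<longrightarrow>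
       (let c' = P1 \<alpha> kh d ops c in
         (\<forall>j<n. \<not> \<alpha> kh j \<longrightarrow> px c' j = px c j \<and> py c' j = py c j) \<and>
         px c' l1 = px c l1 \<and> py c' l1 = py c l1 \<and>
         px c' l2 = px c l2 \<and> py c' l2 = py c l2 \<and>
         px c' k = px c k + 2 * d * cos (th c k) \<and>
         py c' k = py c k + 2 * d * sin (th c k) \<and>
         cong2pi (th c' k) (th c k))"
  proof (intro allI impI)
    fix ops c assume R: "is_Rot m \<alpha> l1 l2 k ops"
    define c1 where "c1 = gEff \<alpha> kh d c"
    define c2 where "c2 = exec_rot \<alpha> ops c1"
    have R2: "\<forall>j. px c2 j = px c1 j \<and> py c2 j = py c1 j"
      "cong2pi (th c2 l1) (th c1 l1 + pi)" "cong2pi (th c2 l2) (th c1 l2 + pi)"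
      "cong2pi (th c2 k) (th c1 k)"
      using R unfolding is_Rot_def c2_def by blast+
    have P: "P1 \<alpha> kh d ops c = gEff \<alpha> kh d c2" unfolding P1_def c2_def c1_def by simp
    have g: "\<And>c j. px (gEff \<alpha> kh d c) j = (if \<alpha> kh j then px c j + d * cos (th c j) else px c j)"
      "\<And>c j. py (gEff \<alpha> kh d c) j = (if \<alpha> kh j then py c j + d * sin (th c j) else py c j)"
      "\<And>c j. th (gEff \<alpha> kh d c) j = th c j"
      by (auto simp: gEff_def px_def py_def th_def)
    have l1: "cos (th c2 l1) = - cos (th c l1) \<and> sin (th c2 l1) = - sin (th c l1)"
      using cong_cos[OF R2(2)] by (simp add: g c1_def)
    have l2: "cos (th c2 l2) = - cos (th c l2) \<and> sin (th c2 l2) = - sin (th c l2)"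
      using cong_cos[OF R2(3)] by (simp add: g c1_def)
    have kk: "cos (th c2 k) = cos (th c k) \<and> sin (th c2 k) = sin (th c k)"
      using cong_cos[OF R2(4)] by (simp add: g c1_def)
    have tk: "cong2pi (th c2 k) (th c k)" using R2(4) by (simp add: g c1_def)
    show "let c' = P1 \<alpha> kh d ops c in
         (\<forall>j<n. \<not> \<alpha> kh j \<longrightarrow> px c' j = px c j \<and> py c' j = py c j) \<and>
         px c' l1 = px c l1 \<and> py c' l1 = py c l1 \<and>
         px c' l2 = px c l2 \<and> py c' l2 = py c l2 \<and>
         px c' k = px c k + 2 * d * cos (th c k) \<and>
         py c' k = py c k + 2 * d * sin (th c k) \<and>
         cong2pi (th c' k) (th c k)"
      unfolding P Let_def using R2(1) l1 l2 kk tk assms(7-9)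
      by (simp add: g c1_def)
  qed
qed

end
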